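(* In the epoch setting described in the context, assume moreover that $\mathcal{G}$ is $\Delta$-temporally connected. If $(s_1,\dots,s_\rho)\in S^{(1)}\times\cdots\times S^{(\rho)}$ is a tuple that is $I$-covering for every $I\in\mathcal{I}$, then $\mathcal{G}$ can be explored from any vertex during the $\rho$ epochs, i.e., for every vertex $v$ there is a temporal walk starting at $v$, using only time steps within the $\rho$ epochs, that visits all vertices.
   Context: A temporal walk in $\mathcal{G}=\langle G_1,\dots,G_L\rangle$ is a sequence $(v_0,e_1,v_1,\dots,e_\ell,v_\ell)$ with strictly increasing time steps $t_1<\dots<t_\ell$ such that $e_j=\{v_{j-1},v_j\}\in E(G_{t_j})$. $\mathcal{G}$ is temporally connected if every ordered pair of vertices is joined by a temporal walk, and $\Delta$-temporally connected if $\langle G_t,\dots,G_{t+\Delta-1}\rangle$ is temporally connected for every $t\in[L-\Delta+1]$. Let $n\ge 2$ and $k\ge1$, $\Delta$ be natural numbers, $\mathcal{G}$ a temporal graph on an $n$-element vertex set $V$, and $T$ a spanning tree of its underlying graph (the union of the snapshots). A snapshot is $k$-edge-deficient w.r.t. $T$ if it contains all but at most $k$ edges of $T$. Let $N=2(n-1)$, fix a DFS tour of $T$ from a root $r$ traversing each edge twice, with cyclic vertex sequence $(v_1,\dots,v_{N+1})$, $v_{N+1}=v_1=r$, tour edges $e_q=\{v_q,v_{q+1}\}$; state $q$ corresponds to vertex $v_q$. Circular intervals: $[\![i,j]\!]=\{i,\dots,j\}$ if $i\le j$, $\{i,\dots,N,1,\dots,j\}$ if $i>j$; $[\![i,j[\![=[\![i,j]\!]\setminus\{j\}$.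 Roundabout process on a sequence $H_1,\dots,H_t$ of graphs: agents $a_1,\dots,a_N$, $s_i(0)=i$; at step $\tau$, if $s_i(\tau-1)=q$ then $s_i(\tau)=(q\bmod N)+1$ if $e_q\in E(H_\tau)$, else $q$; visited states $D_i(\tau)=[\![i,s_i(\tau)]\!]$, $D_i(0)=\{i\}$; active sets $A(0)=$ all agents, and $A(\tau)$ is obtained from $A(\tau-1)$ by repeatedly removing an arbitrary agent $a_i$ with $D_i(\tau)\subseteq\bigcup D_j(\tau)$ over the other current agents, until none remains. Let $t=\lfloor N/(2k)\rfloor$ and $\rho=\lceil 18k\ln(6k)\rceil$. Assume an initial part of $[L]$ is partitioned into $\rho$ consecutive intervals (epochs), each containing at least $\Delta+t$ snapshots that are $k$-edge-deficient w.r.t. $T$; each epoch's first $\Delta$ time steps form its repositioning part, and the rest (containing at least $t$ such snapshots) is its roundabout part. In epoch $i$, run the roundabout process for $t$ steps on the first $t$ $k$-edge-deficient snapshots of its roundabout part, let $A^{(i)}$ be the active agents after step $t$ and $S^{(i)}$ their initial states. Let $\bigcup_{i\in[\rho]}S^{(i)}=\{m_1<\dots<m_d\}$, $I_j=[\![m_j,m_{j+1}[\![$ for $j\in[d-1]$, $I_d=[\![m_d,m_1[\![$, and $\mathcal{I}=\{I_1,\dots,I_d\}$. For $I\in\mathcal{I}$, a tuple $(s_1,\dots,s_\rho)\in S^{(1)}\times\cdots\times S^{(\rho)}$ is $I$-covering unless for every $i\in[\rho]$ the agent of $A^{(i)}$ with initial state $s_i$ fails to visit all states of $I$ in the roundabout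 process of epoch $i$. *)

theory Defs
  imports Complex_Main
begin

text \<open>A temporal graph is given by its snapshot edge sets E t (t = 1..L), each edge a
  2-element subset of the vertex set V.\<close>

definition temporal_walk :: "(nat \<Rightarrow> 'a set set) \<Rightarrow> 'a list \<Rightarrow> nat list \<Rightarrow> bool" where
  "temporal_walk E vs ts \<longleftrightarrow>
     length vs = Suc (length ts) \<and> sorted_wrt (<) ts \<and>
     (\<forall>j < length ts. {vs ! j, vs ! Suc j} \<in> E (ts ! j))"

definition temporally_connected_on :: "'a set \<Rightarrow> (nat \<Rightarrow> 'a set set) \<Rightarrow> nat set \<Rightarrow> bool" where
  "temporally_connected_on V E W \<longleftrightarrow>
     (\<forall>u\<in>V. \<forall>x\<in>V. \<exists>vs ts. temporal_walk E vs ts \<and> hd vs = u \<and> last vs = x \<and> set ts \<subseteq> W)"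

definition delta_temporally_connected :: "'a set \<Rightarrow> (nat \<Rightarrow> 'a set set) \<Rightarrow> nat \<Rightarrow> nat \<Rightarrow> bool" where
  "delta_temporally_connected V E L \<Delta> \<longleftrightarrow>
     (\<forall>t. 1 \<le> t \<and> t + \<Delta> \<le> L + 1 \<longrightarrow> temporally_connected_on V E {t..<t + \<Delta>})"

definition underlying_edges :: "(nat \<Rightarrow> 'a set set) \<Rightarrow> nat \<Rightarrow> 'a set set" where
  "underlying_edges E L = (\<Union>t\<in>{1..L}. E t)"

definition spanning_tree :: "'a set \<Rightarrow> (nat \<Rightarrow> 'a set set) \<Rightarrow> nat \<Rightarrow> 'a set set \<Rightarrow> bool" where
  "spanning_tree V E L T \<longleftrightarrow>
     T \<subseteq> underlying_edges E L \<and> finite T \<and> card T = card V - 1 \<and>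
     (\<forall>x\<in>V. \<forall>y\<in>V. (\<lambda>a b. {a, b} \<in> T)\<^sup>*\<^sup>* x y)"

text \<open>Closed tour (w 1, ..., w (N+1)) of T from the root r, N = 2(n-1), traversing each tree
  edge exactly twice (in a tree such a closed walk is exactly a DFS tour).\<close>
definition dfs_tour :: "'a set set \<Rightarrow> 'a \<Rightarrow> nat \<Rightarrow> (nat \<Rightarrow> 'a) \<Rightarrow> bool" where
  "dfs_tour T r N w \<longleftrightarrow>
     w 1 = r \<and> w (N + 1) = r \<and>
     (\<forall>q\<in>{1..N}. {w q, w (Suc q)} \<in> T) \<and>
     (\<forall>e\<in>T. card {q\<in>{1..N}. {w q, w (Suc q)} = e} = 2)"

definition edge_deficient :: "'a set set \<Rightarrow> nat \<Rightarrow> 'a set set \<Rightarrow> bool" where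
  "edge_deficient T k G \<longleftrightarrow> card (T - G) \<le> k"

definition circ :: "nat \<Rightarrow> nat \<Rightarrow> nat \<Rightarrow> nat set" where
  "circ N i j = (if i \<le> j then {i..j} else {i..N} \<union> {1..j})"

definition circ_open :: "nat \<Rightarrow> nat \<Rightarrow> nat \<Rightarrow> nat set" where
  "circ_open N i j = circ N i j - {j}"

text \<open>State of agent a_i after tau steps on graphs H 1, H 2, ...; tour edge e_q = {w q, w (q+1)}.\<close>
fun rstate :: "(nat \<Rightarrow> 'a) \<Rightarrow> nat \<Rightarrow> (nat \<Rightarrow> 'a set set) \<Rightarrow> nat \<Rightarrow> nat \<Rightarrow> nat" where
  "rstate w N H i 0 = i"
| "rstate w N H i (Suc \<tau>) =
     (let q = rstate w N H i \<tau> in if {w q, w (Suc q)} \<in> H (Suc \<tau>) then q mod N + 1 else q)"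

definition visited :: "(nat \<Rightarrow> 'a) \<Rightarrow> nat \<Rightarrow> (nat \<Rightarrow> 'a set set) \<Rightarrow> nat \<Rightarrow> nat \<Rightarrow> nat set" where
  "visited w N H i \<tau> = circ N i (rstate w N H i \<tau>)"

definition removable :: "(nat \<Rightarrow> nat set) \<Rightarrow> nat set \<Rightarrow> nat \<Rightarrow> bool" where
  "removable D X i \<longleftrightarrow> i \<in> X \<and> D i \<subseteq> (\<Union>j\<in>X - {i}. D j)"

definition remove_step :: "(nat \<Rightarrow> nat set) \<Rightarrow> nat set \<Rightarrow> nat set \<Rightarrow> bool" where
  "remove_step D X Y \<longleftrightarrow> (\<exists>i. removable D X i \<and> Y = X - {i})"

text \<open>Y is a possible outcome of repeatedly removing arbitrary removable agents from X until
  none remains (the choices are arbitrary, so this is a relation).\<close>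
definition reduces :: "(nat \<Rightarrow> nat set) \<Rightarrow> nat set \<Rightarrow> nat set \<Rightarrow> bool" where
  "reduces D X Y \<longleftrightarrow> (remove_step D)\<^sup>*\<^sup>* X Y \<and> \<not> (\<exists>i. removable D Y i)"

text \<open>A is a possible sequence of active sets (agents identified with their indices,
  i.e. with their initial states) for the first t steps of the process.\<close>
definition active_run :: "(nat \<Rightarrow> 'a) \<Rightarrow> nat \<Rightarrow> (nat \<Rightarrow> 'a set set) \<Rightarrow> nat \<Rightarrow> (nat \<Rightarrow> nat set) \<Rightarrow> bool" where
  "active_run w N H t A \<longleftrightarrow>
     A 0 = {1..N} \<and> (\<forall>\<tau><t. reduces (\<lambda>i. visited w N H i (Suc \<tau>)) (A \<tau>) (A (Suc \<tau>)))"

definition rho :: "nat \<Rightarrow> nat" where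
  "rho k = nat \<lceil>18 * real k * ln (6 * real k)\<rceil>"

definition tsteps :: "nat \<Rightarrow> nat \<Rightarrow> nat" where
  "tsteps N k = N div (2 * k)"

definition epoch :: "(nat \<Rightarrow> nat) \<Rightarrow> nat \<Rightarrow> nat set" where
  "epoch b i = {b (i - 1)..<b i}"

definition roundabout_part :: "(nat \<Rightarrow> nat) \<Rightarrow> nat \<Rightarrow> nat \<Rightarrow> nat set" where
  "roundabout_part b \<Delta> i = {b (i - 1) + \<Delta>..<b i}"

text \<open>The graph sequence of epoch i: H tau is the tau-th (tau >= 1) k-edge-deficient snapshot
  of the roundabout part of epoch i.\<close>
definition epoch_graphs ::
  "(nat \<Rightarrow> 'a set set) \<Rightarrow> 'a set set \<Rightarrow> nat \<Rightarrow> (nat \<Rightarrow> nat) \<Rightarrow> nat \<Rightarrow> nat \<Rightarrow> nat \<Rightarrow> 'a set set" where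
  "epoch_graphs E T k b \<Delta> i \<tau> =
     E (sorted_list_of_set {x \<in> roundabout_part b \<Delta> i. edge_deficient T k (E x)} ! (\<tau> - 1))"

definition state_intervals :: "nat \<Rightarrow> nat set \<Rightarrow> nat set set" where
  "state_intervals N M =
     (let ms = sorted_list_of_set M in
      if ms = [] then {} else
        {circ_open N (ms ! j) (ms ! Suc j) | j. Suc j < length ms}
        \<union> {circ_open N (last ms) (hd ms)})"

end

theory Submission
  imports Defs
begin


lemma circ_sub: "i \<in> {1..N} \<Longrightarrow> q \<in> {1..N} \<Longrightarrow> circ N i q \<subseteq> {1..N}"
  by (auto simp: circ_def)

lemma circ_self: "circ N i i = {i}"
  by (simp add: circ_def)

lemma circ_next:
  assumes "i \<in> {1..N}" "q \<in> {1..N}" "q mod N + 1 \<noteq> i"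
  shows "circ N i (q mod N + 1) = insert (q mod N + 1) (circ N i q)"
proof (cases "q < N")
  case True
  then have "q mod N + 1 = q + 1" by simp
  then show ?thesis using assms True by (auto simp: circ_def)
next
  case False
  then have "q = N" using assms by auto
  then have "q mod N + 1 = 1" by simp
  then show ?thesis using assms \<open>q = N\<close> by (auto simp: circ_def)
qed

lemma circ_full:
  assumes "q \<in> {1..N}" "q mod N + 1 = i"
  shows "circ N i q = {1..N}"
proof (cases "q < N")
  case True
  then have "i = q + 1" using assms by simp
  then show ?thesis using assms True by (auto simp: circ_def)
next
  case False
  then have "q = N" using assms by auto
  then have "i = 1" using assms by simp
  then show ?thesis using assms \<open>q = N\<close> by (auto simp: circ_def)
qed

lemma rstate_range: "0 < N \<Longrightarrow> i \<in> {1..N} \<Longrightarrow> rstate w N H i \<tau> \<in> {1..N}"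
proof (induction \<tau>)
  case 0 then show ?case by simp
next
  case (Suc \<tau>)
  have "rstate w N H i \<tau> mod N < N" using Suc by simp
  then have "Suc (rstate w N H i \<tau> mod N) \<le> N" by simp
  then show ?case using Suc by (auto simp: Let_def)
qed

lemma visited_sub: "0 < N \<Longrightarrow> i \<in> {1..N} \<Longrightarrow> visited w N H i \<tau> \<subseteq> {1..N}"
  unfolding visited_def using circ_sub rstate_range by blast

lemma visited_card:
  assumes i: "i \<in> {1..N}" and tN: "\<tau> < N"
  shows "card (visited w N H i \<tau>) \<le> Suc \<tau>"
  using tN
proof (induction \<tau>)
  case 0 show ?case by (simp add: visited_def circ_def)
next
  case (Suc \<tau>)
  let ?q = "rstate w N H i \<tau>"
  have q: "?q \<in> {1..N}" using rstate_range[of N i] i Suc.prems by auto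
  have IH: "card (visited w N H i \<tau>) \<le> Suc \<tau>" using Suc by simp
  have fin: "finite (visited w N H i \<tau>)"
    using visited_sub[of N i w H \<tau>] Suc i finite_subset by auto
  show ?case
  proof (cases "{w ?q, w (Suc ?q)} \<in> H (Suc \<tau>)")
    case False
    then have "visited w N H i (Suc \<tau>) = visited w N H i \<tau>"
      by (simp add: visited_def Let_def)
    then show ?thesis using IH by simp
  next
    case True
    have ne: "?q mod N + 1 \<noteq> i"
    proof
      assume "?q mod N + 1 = i"
      then have "visited w N H i \<tau> = {1..N}" using circ_full q by (simp add: visited_def)
      then show False using IH Suc.prems by simp
    qed
    have "visited w N H i (Suc \<tau>) = insert (?q mod N + 1) (visited w N H i \<tau>)"
      using True circ_next[OF i q ne] by (simp add: visited_def Let_def)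
    then show ?thesis using IH fin by (simp add: card_insert_if)
  qed
qed

lemma visited_step:
  assumes i: "i \<in> {1..N}" and tN: "Suc \<tau> < N"
  shows "(rstate w N H i (Suc \<tau>) = rstate w N H i \<tau> \<and> visited w N H i (Suc \<tau>) = visited w N H i \<tau>) \<or>
         ({w (rstate w N H i \<tau>), w (Suc (rstate w N H i \<tau>))} \<in> H (Suc \<tau>) \<and>
          rstate w N H i (Suc \<tau>) = rstate w N H i \<tau> mod N + 1 \<and>
          visited w N H i (Suc \<tau>) = insert (rstate w N H i (Suc \<tau>)) (visited w N H i \<tau>))"
proof -
  let ?q = "rstate w N H i \<tau>"
  have q: "?q \<in> {1..N}" using rstate_range[of N i] i tN by auto
  have IH: "card (visited w N H i \<tau>) \<le> Suc \<tau>" using visited_card[OF i, of \<tau>] tN by simp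
  show ?thesis
  proof (cases "{w ?q, w (Suc ?q)} \<in> H (Suc \<tau>)")
    case False
    then show ?thesis by (simp add: visited_def Let_def)
  next
    case True
    have ne: "?q mod N + 1 \<noteq> i"
    proof
      assume "?q mod N + 1 = i"
      then have "visited w N H i \<tau> = {1..N}" using circ_full q by (simp add: visited_def)
      then show False using IH tN by simp
    qed
    show ?thesis
      using True circ_next[OF i q ne] by (simp add: visited_def Let_def)
  qed
qed



lemma walk_single: "temporal_walk E [u] []"
  by (simp add: temporal_walk_def)

lemma walk_cons:
  "temporal_walk E (v # vs) (t # ts) \<longleftrightarrow>
     vs \<noteq> [] \<and> {v, hd vs} \<in> E t \<and> (\<forall>x\<in>set ts. t < x) \<and> temporal_walk E vs ts"
proof -
  have A: "(\<forall>j<Suc n. P j) = (P 0 \<and> (\<forall>j<n. P (Suc j)))" for n and P :: "nat \<Rightarrow> bool"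
    using All_less_Suc2 by blast
  show ?thesis
    unfolding temporal_walk_def
    by (cases vs) (auto simp: A)
qed

lemma walk_snoc:
  assumes w: "temporal_walk E vs ts" and e: "{last vs, x} \<in> E t'" and lt: "\<forall>t\<in>set ts. t < t'"
  shows "temporal_walk E (vs @ [x]) (ts @ [t'])"
proof -
  have len: "length vs = Suc (length ts)" using w by (simp add: temporal_walk_def)
  have lastv: "last vs = vs ! length ts" using len
    by (metis diff_Suc_1 last_conv_nth list.size(3) nat.distinct(1))
  show ?thesis
    unfolding temporal_walk_def
  proof (intro conjI allI impI)
    show "length (vs @ [x]) = Suc (length (ts @ [t']))" using len by simp
    show "sorted_wrt (<) (ts @ [t'])" using w lt by (auto simp: temporal_walk_def sorted_wrt_append)
  next
    fix j assume j: "j < length (ts @ [t'])"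
    show "{(vs @ [x]) ! j, (vs @ [x]) ! Suc j} \<in> E ((ts @ [t']) ! j)"
    proof (cases "j < length ts")
      case True
      then show ?thesis using w len by (auto simp: temporal_walk_def nth_append)
    next
      case False
      then have "j = length ts" using j by simp
      then show ?thesis using e len lastv by (auto simp: nth_append)
    qed
  qed
qed

lemma walk_append:
  assumes "temporal_walk E vs ts" "temporal_walk E vs' ts'" "last vs = hd vs'"
    "\<forall>a\<in>set ts. \<forall>b\<in>set ts'. a < b"
  shows "temporal_walk E (vs @ tl vs') (ts @ ts')"
  using assms
proof (induction ts' arbitrary: vs' vs ts)
  case Nil
  then have "length vs' = 1" by (simp add: temporal_walk_def)
  then have "tl vs' = []" by (cases vs') auto
  then show ?case using Nil by simp
next
  case (Cons t ts'')
  obtain v vs'' where vs': "vs' = v # vs''"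
    using Cons.prems(2) by (cases vs') (auto simp: temporal_walk_def)
  have c: "vs'' \<noteq> [] \<and> {v, hd vs''} \<in> E t \<and> (\<forall>x\<in>set ts''. t < x) \<and> temporal_walk E vs'' ts''"
    using Cons.prems(2) vs' walk_cons by metis
  have w1: "temporal_walk E (vs @ [hd vs'']) (ts @ [t])"
    using walk_snoc[OF Cons.prems(1)] c Cons.prems(3,4) vs' by auto
  have "temporal_walk E ((vs @ [hd vs'']) @ tl vs'') ((ts @ [t]) @ ts'')"
    by (rule Cons.IH[OF w1]) (use c Cons.prems(4) in auto)
  moreover have "(vs @ [hd vs'']) @ tl vs'' = vs @ tl vs'" using c vs' by (cases vs'') auto
  ultimately show ?case by simp
qed

lemma walk_append':
  assumes w1: "temporal_walk E vs ts" and w2: "temporal_walk E vs' ts'" and l: "last vs = hd vs'"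
    and o: "\<forall>a\<in>set ts. \<forall>b\<in>set ts'. a < b"
  shows "temporal_walk E (vs @ tl vs') (ts @ ts') \<and> hd (vs @ tl vs') = hd vs \<and>
         last (vs @ tl vs') = last vs' \<and> set (vs @ tl vs') = set vs \<union> set vs'"
proof -
  have ne: "vs \<noteq> []" "vs' \<noteq> []" using w1 w2 by (auto simp: temporal_walk_def)
  have s: "set vs' = insert (hd vs') (set (tl vs'))" using ne by (cases vs') auto
  have "last vs \<in> set vs" using ne by simp
  then have "set (vs @ tl vs') = set vs \<union> set vs'" using s l by auto
  moreover have "last (vs @ tl vs') = last vs'"
    using ne l by (cases vs') auto
  ultimately show ?thesis using walk_append[OF assms] ne by simp
qed



lemma agent_walk:
  assumes i: "i \<in> {1..N}" and wN: "w (Suc N) = w 1"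
    and H: "\<forall>\<tau><t. H (Suc \<tau>) = E (g \<tau>)"
    and g: "\<forall>a b. a < b \<and> b < t \<longrightarrow> g a < g b"
    and tN: "t < N"
  shows "\<tau> \<le> t \<Longrightarrow> \<exists>vs ts. temporal_walk E vs ts \<and> hd vs = w i \<and> last vs = w (rstate w N H i \<tau>) \<and>
      set ts \<subseteq> g ` {..<\<tau>} \<and> w ` visited w N H i \<tau> \<subseteq> set vs"
proof (induction \<tau>)
  case 0
  show ?case
    by (rule exI[of _ "[w i]"], rule exI[of _ "[]"]) (simp add: walk_single visited_def circ_self)
next
  case (Suc \<tau>)
  then obtain vs ts where W: "temporal_walk E vs ts" "hd vs = w i" "last vs = w (rstate w N H i \<tau>)"
      "set ts \<subseteq> g ` {..<\<tau>}" "w ` visited w N H i \<tau> \<subseteq> set vs" by auto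
  have st: "Suc \<tau> < N" using Suc tN by simp
  let ?q = "rstate w N H i \<tau>"
  have q: "?q \<in> {1..N}" using rstate_range[of N i] i st by auto
  from visited_step[OF i st, of w H] show ?case
  proof
    assume a: "rstate w N H i (Suc \<tau>) = ?q \<and> visited w N H i (Suc \<tau>) = visited w N H i \<tau>"
    show ?thesis
      using W a by (intro exI[of _ vs] exI[of _ ts]) auto
  next
    assume a: "{w ?q, w (Suc ?q)} \<in> H (Suc \<tau>) \<and>
          rstate w N H i (Suc \<tau>) = ?q mod N + 1 \<and>
          visited w N H i (Suc \<tau>) = insert (rstate w N H i (Suc \<tau>)) (visited w N H i \<tau>)"
    have wq: "w (?q mod N + 1) = w (Suc ?q)"
    proof (cases "?q < N")
      case True then show ?thesis by simp
    next
      case False then have "?q = N" using q by simp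
      then show ?thesis using wN by simp
    qed
    have e: "{last vs, w (?q mod N + 1)} \<in> E (g \<tau>)"
      using a W(3) wq H Suc.prems by auto
    have lt: "\<forall>x\<in>set ts. x < g \<tau>" using W(4) g Suc.prems by auto
    have W2: "temporal_walk E (vs @ [w (?q mod N + 1)]) (ts @ [g \<tau>])"
      by (rule walk_snoc[OF W(1) e lt])
    have ne: "vs \<noteq> []" using W(1) by (auto simp: temporal_walk_def)
    show ?thesis
      apply (rule exI[of _ "vs @ [w (?q mod N + 1)]"], rule exI[of _ "ts @ [g \<tau>]"])
      using W2 W ne a by auto
  qed
qed

lemma reduces_props:
  assumes "reduces D X Y" shows "Y \<subseteq> X \<and> (\<Union>j\<in>Y. D j) = (\<Union>j\<in>X. D j)"
proof -
  have "(remove_step D)\<^sup>*\<^sup>* X Y" using assms by (simp add: reduces_def)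
  then show ?thesis
  proof (induction rule: rtranclp_induct)
    case base then show ?case by simp
  next
    case (step Y Z)
    then obtain i where i: "removable D Y i" "Z = Y - {i}" by (auto simp: remove_step_def)
    have "(\<Union>j\<in>Z. D j) = (\<Union>j\<in>Y. D j)"
      using i by (auto simp: removable_def)
    then show ?case using step i by auto
  qed
qed

lemma active_inv:
  assumes run: "active_run w N H t A" and tN: "t < N"
  shows "\<tau> \<le> t \<Longrightarrow> A \<tau> \<subseteq> {1..N} \<and> (\<Union>j\<in>A \<tau>. visited w N H j \<tau>) = {1..N}"
proof (induction \<tau>)
  case 0
  have "A 0 = {1..N}" using run by (simp add: active_run_def)
  then show ?case by (simp add: visited_def circ_self)
next
  case (Suc \<tau>)
  have IH: "A \<tau> \<subseteq> {1..N}" "(\<Union>j\<in>A \<tau>. visited w N H j \<tau>) = {1..N}" using Suc by auto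
  have red: "reduces (\<lambda>j. visited w N H j (Suc \<tau>)) (A \<tau>) (A (Suc \<tau>))"
    using run Suc.prems by (simp add: active_run_def)
  have st: "Suc \<tau> < N" using Suc.prems tN by simp
  have mono: "visited w N H j \<tau> \<subseteq> visited w N H j (Suc \<tau>)" if "j \<in> A \<tau>" for j
  proof -
    have j: "j \<in> {1..N}" using that IH(1) by auto
    from visited_step[OF j st, of w H] show ?thesis by blast
  qed
  have sub: "visited w N H j (Suc \<tau>) \<subseteq> {1..N}" if "j \<in> A \<tau>" for j
  proof -
    have j: "j \<in> {1..N}" using that IH(1) by auto
    show ?thesis using visited_sub[of N j w H "Suc \<tau>"] st j by auto
  qed
  have "(\<Union>j\<in>A \<tau>. visited w N H j (Suc \<tau>)) = {1..N}"
  proof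
    show "(\<Union>j\<in>A \<tau>. visited w N H j (Suc \<tau>)) \<subseteq> {1..N}" using sub by blast
    show "{1..N} \<subseteq> (\<Union>j\<in>A \<tau>. visited w N H j (Suc \<tau>))" using IH(2) mono by blast
  qed
  then show ?case using reduces_props[OF red] IH(1) by auto
qed

lemma sorted_find:
  fixes xs :: "nat list"
  shows "sorted_wrt (<) xs \<Longrightarrow> xs \<noteq> [] \<Longrightarrow> hd xs \<le> q \<Longrightarrow> q < last xs \<Longrightarrow>
   \<exists>j. Suc j < length xs \<and> xs ! j \<le> q \<and> q < xs ! Suc j"
proof (induction xs)
  case Nil then show ?case by simp
next
  case (Cons x xs)
  show ?case
  proof (cases "xs = []")
    case True then show ?thesis using Cons by simp
  next
    case False
    show ?thesis
    proof (cases "q < hd xs")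
      case True
      then show ?thesis using Cons False
        by (intro exI[of _ 0]) (auto simp: hd_conv_nth)
    next
      case nle: False
      have "\<exists>j. Suc j < length xs \<and> xs ! j \<le> q \<and> q < xs ! Suc j"
        using Cons False nle by auto
      then obtain j where "Suc j < length xs \<and> xs ! j \<le> q \<and> q < xs ! Suc j" by blast
      then show ?thesis by (intro exI[of _ "Suc j"]) auto
    qed
  qed
qed

lemma intervals_cover:
  assumes fin: "finite M" and MN: "M \<subseteq> {1..N}" and c2: "2 \<le> card M" and q: "q \<in> {1..N}"
  shows "\<exists>I\<in>state_intervals N M. q \<in> I"
proof -
  define ms where "ms = sorted_list_of_set M"
  have len: "length ms = card M" using fin by (simp add: ms_def)
  have srt: "sorted_wrt (<) ms" by (simp add: ms_def)
  have ne: "ms \<noteq> []" using len c2 by auto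
  have hdl: "hd ms < last ms"
  proof -
    have "hd ms = ms ! 0" using ne by (simp add: hd_conv_nth)
    moreover have "last ms = ms ! (length ms - 1)" using ne by (simp add: last_conv_nth)
    moreover have "ms ! 0 < ms ! (length ms - 1)"
      using sorted_wrt_nth_less[OF srt, of 0 "length ms - 1"] len c2 by auto
    ultimately show ?thesis by simp
  qed
  have SI: "state_intervals N M =
        {circ_open N (ms ! j) (ms ! Suc j) | j. Suc j < length ms} \<union> {circ_open N (last ms) (hd ms)}"
    using ne by (simp add: state_intervals_def ms_def Let_def)
  show ?thesis
  proof (cases "q < hd ms \<or> last ms \<le> q")
    case True
    have "q \<in> circ_open N (last ms) (hd ms)"
      using True q hdl by (auto simp: circ_open_def circ_def)
    then show ?thesis using SI by auto
  next
    case False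
    then obtain j where j: "Suc j < length ms" "ms ! j \<le> q" "q < ms ! Suc j"
      using sorted_find[OF srt ne, of q] by auto
    have "ms ! j < ms ! Suc j" using sorted_wrt_nth_less[OF srt, of j "Suc j"] j(1) by auto
    then have "q \<in> circ_open N (ms ! j) (ms ! Suc j)"
      using j by (auto simp: circ_open_def circ_def)
    then show ?thesis using SI j(1) by auto
  qed
qed



theorem lemma13:
  fixes V :: "'a set" and E :: "nat \<Rightarrow> 'a set set" and L n k \<Delta> N :: nat
    and T :: "'a set set" and r :: 'a and w :: "nat \<Rightarrow> 'a"
    and b :: "nat \<Rightarrow> nat" and A :: "nat \<Rightarrow> nat \<Rightarrow> nat set" and s :: "nat \<Rightarrow> nat"
  assumes fin: "finite V" and cardV: "card V = n" and n2: "n \<ge> 2" and k1: "k \<ge> 1"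
    and snapshots: "\<forall>t e. e \<in> E t \<longrightarrow> e \<subseteq> V \<and> card e = 2"
    and tree: "spanning_tree V E L T"
    and N_def: "N = 2 * (n - 1)"
    and root: "r \<in> V"
    and tour: "dfs_tour T r N w"
    and b0: "b 0 = 1"
    and b_mono: "\<forall>i < rho k. b i < b (Suc i)"
    and b_end: "b (rho k) \<le> L + 1"
    and epochs: "\<forall>i\<in>{1..rho k}.
        card {x \<in> epoch b i. edge_deficient T k (E x)} \<ge> \<Delta> + tsteps N k \<and>
        card {x \<in> roundabout_part b \<Delta> i. edge_deficient T k (E x)} \<ge> tsteps N k"
    and runs: "\<forall>i\<in>{1..rho k}. active_run w N (epoch_graphs E T k b \<Delta> i) (tsteps N k) (A i)"
    and dtc: "delta_temporally_connected V E L \<Delta>"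
    and tuple: "\<forall>i\<in>{1..rho k}. s i \<in> A i (tsteps N k)"
    and covering: "\<forall>I \<in> state_intervals N (\<Union>i\<in>{1..rho k}. A i (tsteps N k)).
        \<exists>i\<in>{1..rho k}. I \<subseteq> visited w N (epoch_graphs E T k b \<Delta> i) (s i) (tsteps N k)"
  shows "\<forall>u\<in>V. \<exists>vs ts. temporal_walk E vs ts \<and> hd vs = u \<and>
           set ts \<subseteq> {b 0..<b (rho k)} \<and> V \<subseteq> set vs"
proof -
  define t where "t = tsteps N k"
  define R where "R = rho k"
  define H where "H i = epoch_graphs E T k b \<Delta> i" for i
  have N2: "N \<ge> 2" using N_def n2 by simp
  have tle: "t \<le> N div 2" unfolding t_def tsteps_def using k1 by (intro div_le_mono2) auto
  have tN: "t < N" using tle N2 by linarith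
  have R1: "R \<ge> 1"
  proof -
    have "ln (6 * real k) > 0" using k1 by (intro ln_gt_zero) auto
    then have "18 * real k * ln (6 * real k) > 0" using k1 by simp
    then have "\<lceil>18 * real k * ln (6 * real k)\<rceil> \<ge> 1" by linarith
    then show ?thesis unfolding R_def rho_def by linarith
  qed
  have Tsub: "\<forall>e\<in>T. e \<subseteq> V"
    using tree snapshots unfolding spanning_tree_def underlying_edges_def by blast
  have tedge: "\<forall>q\<in>{1..N}. {w q, w (Suc q)} \<in> T" and w1: "w 1 = r" and wN1: "w (N + 1) = r"
    using tour by (auto simp: dfs_tour_def)
  have wN: "w (Suc N) = w 1" using w1 wN1 by simp
  have wV: "w q \<in> V" if "q \<in> {1..N}" for q using tedge Tsub that by blast
  have Vcov: "V \<subseteq> w ` {1..N}"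
  proof
    fix x assume x: "x \<in> V"
    have "(\<lambda>a b. {a, b} \<in> T)\<^sup>*\<^sup>* r x" using tree root x by (auto simp: spanning_tree_def)
    then show "x \<in> w ` {1..N}"
    proof (cases rule: rtranclp.cases)
      case rtrancl_refl
      then show ?thesis using w1 N2 by force
    next
      case (rtrancl_into_rtrancl y)
      then have e: "{y, x} \<in> T" by simp
      then have "card {q\<in>{1..N}. {w q, w (Suc q)} = {y, x}} = 2" using tour by (auto simp: dfs_tour_def)
      then have "{q\<in>{1..N}. {w q, w (Suc q)} = {y, x}} \<noteq> {}" by (metis card.empty zero_neq_numeral)
      then obtain q where q: "q \<in> {1..N}" "{w q, w (Suc q)} = {y, x}" by blast
      then have "x = w q \<or> x = w (Suc q)" by (metis doubleton_eq_iff insert_iff)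
      then show ?thesis
      proof
        assume "x = w q" then show ?thesis using q by auto
      next
        assume xs: "x = w (Suc q)"
        show ?thesis
        proof (cases "q < N")
          case True then show ?thesis using xs q by force
        next
          case False then have "q = N" using q by simp
          then show ?thesis using xs wN N2 by force
        qed
      qed
    qed
  qed
  have bmono: "b i \<le> b j" if "i \<le> j" "j \<le> R" for i j
    using that
  proof (induction j)
    case 0 then show ?case by simp
  next
    case (Suc j)
    show ?case
    proof (cases "i = Suc j")
      case True then show ?thesis by simp
    next
      case False
      then have "b i \<le> b j" using Suc by simp
      moreover have "b j < b (Suc j)" using b_mono Suc.prems unfolding R_def by simp
      ultimately show ?thesis by simp
    qed
  qed

  have gap: "b (i - 1) + \<Delta> \<le> b i" if i: "i \<in> {1..R}" for i
  proof -
    have "b (i - 1) \<le> b i" using bmono that by auto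
    have "\<Delta> + t \<le> card {x \<in> epoch b i. edge_deficient T k (E x)}"
      using epochs i unfolding R_def t_def by blast
    also have "\<dots> \<le> card (epoch b i)" by (intro card_mono) (auto simp: epoch_def)
    also have "\<dots> = b i - b (i - 1)" by (simp add: epoch_def)
    finally show ?thesis using \<open>b (i - 1) \<le> b i\<close> by linarith
  qed
  define S where "S i = {x \<in> roundabout_part b \<Delta> i. edge_deficient T k (E x)}" for i
  define g where "g i j = sorted_list_of_set (S i) ! j" for i j
  have finS: "finite (S i)" for i unfolding S_def roundabout_part_def by simp
  have Hg: "H i (Suc \<tau>) = E (g i \<tau>)" for i \<tau>
    by (simp add: H_def epoch_graphs_def g_def S_def)
  have lenS: "t \<le> length (sorted_list_of_set (S i))" if "i \<in> {1..R}" for i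
    using epochs that finS unfolding R_def t_def S_def by simp
  have gmono: "\<forall>a c. a < c \<and> c < t \<longrightarrow> g i a < g i c" if "i \<in> {1..R}" for i
    using lenS[OF that] unfolding g_def
    by (auto intro: sorted_wrt_nth_less)
  have grange: "g i j \<in> {b (i - 1) + \<Delta>..<b i}" if "i \<in> {1..R}" "j < t" for i j
  proof -
    have "g i j \<in> set (sorted_list_of_set (S i))"
      unfolding g_def using lenS[OF that(1)] that(2) by (intro nth_mem) simp
    then have "g i j \<in> S i" using finS by simp
    then show ?thesis by (simp add: S_def roundabout_part_def)
  qed
  have inv: "A i t \<subseteq> {1..N} \<and> (\<Union>j\<in>A i t. visited w N (H i) j t) = {1..N}" if "i \<in> {1..R}" for i
    using active_inv[of w N "H i" t "A i" t] runs that tN unfolding H_def R_def t_def by auto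
  have sN: "s i \<in> {1..N}" if "i \<in> {1..R}" for i
    using inv[OF that] tuple that unfolding R_def t_def by blast
  have cover: "{1..N} \<subseteq> (\<Union>i\<in>{1..R}. visited w N (H i) (s i) t)"
  proof
    fix q assume q: "q \<in> {1..N}"
    define M where "M = (\<Union>i\<in>{1..R}. A i t)"
    have MN: "M \<subseteq> {1..N}" using inv unfolding M_def by blast
    have finM: "finite M" using MN finite_subset by blast
    have s1: "s 1 \<in> M" using tuple R1 unfolding M_def R_def t_def by (intro UN_I[of 1]) auto
    show "q \<in> (\<Union>i\<in>{1..R}. visited w N (H i) (s i) t)"
    proof (cases "2 \<le> card M")
      case True
      then obtain I where I: "I \<in> state_intervals N M" "q \<in> I"
        using intervals_cover[OF finM MN _ q] by blast
      then obtain i where "i \<in> {1..R}" "I \<subseteq> visited w N (H i) (s i) t"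
        using covering unfolding M_def R_def t_def H_def by blast
      then show ?thesis using I by blast
    next
      case False
      have "card M \<noteq> 0" using s1 finM by auto
      then have "card M = 1" using False by linarith
      then obtain m where "M = {m}" using card_1_singletonE by blast
      moreover have "A 1 t \<subseteq> M" using R1 unfolding M_def by auto
      moreover have "s 1 \<in> A 1 t" using tuple R1 unfolding R_def t_def by auto
      ultimately have "A 1 t = {s 1}" by auto
      then have "visited w N (H 1) (s 1) t = {1..N}" using inv[of 1] R1 by auto
      then show ?thesis using q R1 by (intro UN_I[of 1]) auto
    qed
  qed
  have main: "\<forall>u\<in>V. \<exists>vs ts. temporal_walk E vs ts \<and> hd vs = u \<and> last vs \<in> V \<and>
      set ts \<subseteq> {b 0..<b j} \<and> (\<Union>i\<in>{1..j}. w ` visited w N (H i) (s i) t) \<subseteq> set vs"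
    if "j \<le> R" for j
    using that
  proof (induction j)
    case 0
    show ?case
      by (intro ballI exI[of _ "[u]" for u] exI[of _ "[]"]) (auto simp: walk_single)
  next
    case (Suc j)
    show ?case
    proof
      fix u assume u: "u \<in> V"
      have iR: "Suc j \<in> {1..R}" using Suc.prems by simp
      obtain vs1 ts1 where W1: "temporal_walk E vs1 ts1" "hd vs1 = u" "last vs1 \<in> V"
          "set ts1 \<subseteq> {b 0..<b j}" "(\<Union>i\<in>{1..j}. w ` visited w N (H i) (s i) t) \<subseteq> set vs1"
        using Suc u by auto
      have gp: "b j + \<Delta> \<le> b (Suc j)" using gap[OF iR] by simp
      have bj1: "1 \<le> b j" using bmono[of 0 j] b0 Suc.prems by simp
      have bjL: "b j + \<Delta> \<le> L + 1" using gp bmono[of "Suc j" R] Suc.prems b_end unfolding R_def by simp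
      have tc: "temporally_connected_on V E {b j..<b j + \<Delta>}"
        using dtc bj1 bjL by (simp add: delta_temporally_connected_def)
      have ws: "w (s (Suc j)) \<in> V" using wV sN[OF iR] by blast
      obtain vs2 ts2 where W2: "temporal_walk E vs2 ts2" "hd vs2 = last vs1" "last vs2 = w (s (Suc j))"
          "set ts2 \<subseteq> {b j..<b j + \<Delta>}"
        using tc W1(3) ws unfolding temporally_connected_on_def by blast
      obtain vs3 ts3 where W3: "temporal_walk E vs3 ts3" "hd vs3 = w (s (Suc j))"
          "last vs3 = w (rstate w N (H (Suc j)) (s (Suc j)) t)"
          "set ts3 \<subseteq> g (Suc j) ` {..<t}" "w ` visited w N (H (Suc j)) (s (Suc j)) t \<subseteq> set vs3"
        using agent_walk[where H="H (Suc j)" and E=E and g="g (Suc j)" and t=t and \<tau>=t, OF sN[OF iR] wN _ gmono[OF iR] tN] Hg by blast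
      have ts3r: "set ts3 \<subseteq> {b j + \<Delta>..<b (Suc j)}" using W3(4) grange[OF iR] by auto
      have bjs: "b 0 \<le> b j" using bmono[of 0 j] Suc.prems by simp
      have A12: "temporal_walk E (vs1 @ tl vs2) (ts1 @ ts2) \<and> hd (vs1 @ tl vs2) = hd vs1 \<and>
         last (vs1 @ tl vs2) = last vs2 \<and> set (vs1 @ tl vs2) = set vs1 \<union> set vs2"
      proof -
        have o12: "\<forall>a\<in>set ts1. \<forall>c\<in>set ts2. a < c"
        proof (intro ballI)
          fix a c assume "a \<in> set ts1" "c \<in> set ts2"
          then have "a < b j" "b j \<le> c" using W1(4) W2(4) by auto
          then show "a < c" by simp
        qed
        show ?thesis by (rule walk_append'[OF W1(1) W2(1) W2(2)[symmetric] o12])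
      qed
      have A123: "temporal_walk E ((vs1 @ tl vs2) @ tl vs3) ((ts1 @ ts2) @ ts3) \<and>
          hd ((vs1 @ tl vs2) @ tl vs3) = hd (vs1 @ tl vs2) \<and>
          last ((vs1 @ tl vs2) @ tl vs3) = last vs3 \<and>
          set ((vs1 @ tl vs2) @ tl vs3) = set (vs1 @ tl vs2) \<union> set vs3"
      proof -
        have o: "\<forall>a\<in>set (ts1 @ ts2). \<forall>c\<in>set ts3. a < c"
        proof (intro ballI)
          fix a c assume "a \<in> set (ts1 @ ts2)" "c \<in> set ts3"
          then have "a < b j + \<Delta>" "b j + \<Delta> \<le> c" using W1(4) W2(4) ts3r bjs by auto
          then show "a < c" by simp
        qed
        have l: "last (vs1 @ tl vs2) = hd vs3" using A12 W2(3) W3(2) by simp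
        have w12: "temporal_walk E (vs1 @ tl vs2) (ts1 @ ts2)" using A12 by blast
        show ?thesis by (rule walk_append'[OF w12 W3(1) l o])
      qed
      have lastV: "last vs3 \<in> V"
        using W3(3) wV rstate_range[of N "s (Suc j)"] sN[OF iR] tN by auto
      have tsr: "set ((ts1 @ ts2) @ ts3) \<subseteq> {b 0..<b (Suc j)}"
        using W1(4) W2(4) ts3r bjs gp by auto
      define RV where "RV = (vs1 @ tl vs2) @ tl vs3"
      define RT where "RT = (ts1 @ ts2) @ ts3"
      have sRV: "set RV = set vs1 \<union> set vs2 \<union> set vs3"
        using A123 A12 unfolding RV_def by (simp only:)
      have cov: "(\<Union>i\<in>{1..Suc j}. w ` visited w N (H i) (s i) t) \<subseteq> set RV"
      proof
        fix x assume "x \<in> (\<Union>i\<in>{1..Suc j}. w ` visited w N (H i) (s i) t)"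
        then obtain i where i: "i \<in> {1..Suc j}" "x \<in> w ` visited w N (H i) (s i) t" by blast
        show "x \<in> set RV"
        proof (cases "i = Suc j")
          case True then show ?thesis using i W3(5) sRV by blast
        next
          case False then have "i \<in> {1..j}" using i by simp
          then show ?thesis using i W1(5) sRV by blast
        qed
      qed
      have wRV: "temporal_walk E RV RT" using A123 unfolding RV_def RT_def by blast
      have hRV: "hd RV = u" using A123 A12 W1(2) unfolding RV_def by simp
      have lRV: "last RV \<in> V" using A123 lastV unfolding RV_def by simp
      have tRV: "set RT \<subseteq> {b 0..<b (Suc j)}" using tsr unfolding RT_def .
      show "\<exists>vs ts. temporal_walk E vs ts \<and> hd vs = u \<and> last vs \<in> V \<and>
          set ts \<subseteq> {b 0..<b (Suc j)} \<and> (\<Union>i\<in>{1..Suc j}. w ` visited w N (H i) (s i) t) \<subseteq> set vs"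
        using wRV hRV lRV tRV cov by blast
    qed
  qed
  show ?thesis
  proof
    fix u assume u: "u \<in> V"
    obtain vs ts where W: "temporal_walk E vs ts" "hd vs = u"
        "set ts \<subseteq> {b 0..<b R}" "(\<Union>i\<in>{1..R}. w ` visited w N (H i) (s i) t) \<subseteq> set vs"
      using main[of R] u by blast
    have "V \<subseteq> set vs" using Vcov cover W(4) by blast
    then show "\<exists>vs ts. temporal_walk E vs ts \<and> hd vs = u \<and> set ts \<subseteq> {b 0..<b (rho k)} \<and> V \<subseteq> set vs"
      using W unfolding R_def by blast
  qed
qed
end
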